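(* Let $S$ be a semigroup of transformations of a finite set $\Omega$ with $|\Omega|=n$, and suppose $S$ contains a permutation group $G$ that is primitive on $\Omega$. Suppose the minimum rank of an element of $S$ is $r$, where $r>1$. Then there is no element of $S$ of rank greater than $r$ whose kernel partition has $r-1$ parts of size $n/r$.
   Context: The rank of a transformation $h$ is $|\Omega h|$; its kernel partition is the partition of $\Omega$ into the inverse images of the points of its image. A permutation group is primitive if it is transitive and preserves no equivalence relation other than equality and the universal relation. *)

theory Defs
  imports Complex_Main "HOL-Library.FuncSet"
begin

definition transf_semigroup :: "'a set \<Rightarrow> ('a \<Rightarrow> 'a) set \<Rightarrow> bool" where
  "transf_semigroup \<Omega> S \<longleftrightarrow> S \<subseteq> (\<Omega> \<rightarrow>\<^sub>E \<Omega>) \<and>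
     (\<forall>f\<in>S. \<forall>g\<in>S. compose \<Omega> g f \<in> S)"

definition perm_group :: "'a set \<Rightarrow> ('a \<Rightarrow> 'a) set \<Rightarrow> bool" where
  "perm_group \<Omega> G \<longleftrightarrow> G \<subseteq> (\<Omega> \<rightarrow>\<^sub>E \<Omega>) \<and>
     (\<forall>g\<in>G. bij_betw g \<Omega> \<Omega>) \<and>
     restrict id \<Omega> \<in> G \<and>
     (\<forall>f\<in>G. \<forall>g\<in>G. compose \<Omega> g f \<in> G) \<and>
     (\<forall>g\<in>G. restrict (inv_into \<Omega> g) \<Omega> \<in> G)"

definition transitive_on :: "'a set \<Rightarrow> ('a \<Rightarrow> 'a) set \<Rightarrow> bool" where
  "transitive_on \<Omega> G \<longleftrightarrow> (\<forall>x\<in>\<Omega>. \<forall>y\<in>\<Omega>. \<exists>g\<in>G. g x = y)"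

definition preserves_rel :: "('a \<Rightarrow> 'a) set \<Rightarrow> 'a rel \<Rightarrow> bool" where
  "preserves_rel G R \<longleftrightarrow> (\<forall>g\<in>G. \<forall>(x, y)\<in>R. (g x, g y) \<in> R)"

definition primitive :: "'a set \<Rightarrow> ('a \<Rightarrow> 'a) set \<Rightarrow> bool" where
  "primitive \<Omega> G \<longleftrightarrow> transitive_on \<Omega> G \<and>
     (\<forall>R. equiv \<Omega> R \<and> preserves_rel G R \<longrightarrow> R = Id_on \<Omega> \<or> R = \<Omega> \<times> \<Omega>)"

definition rank :: "'a set \<Rightarrow> ('a \<Rightarrow> 'a) \<Rightarrow> nat" where
  "rank \<Omega> h = card (h ` \<Omega>)"

definition kernel_partition :: "'a set \<Rightarrow> ('a \<Rightarrow> 'a) \<Rightarrow> 'a set set" where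
  "kernel_partition \<Omega> h = {\<Omega> \<inter> h -` {y} | y. y \<in> h ` \<Omega>}"

end

theory Submission
  imports Defs
begin

lemma card_filter_sum: "finite A \<Longrightarrow> card {x\<in>A. P x} = (\<Sum>x\<in>A. if P x then 1 else 0)"
  by (simp add: sum.inter_filter[symmetric])

lemma card_swap:
  assumes "finite A" "finite B"
  shows "(\<Sum>a\<in>A. card {b\<in>B. R a b}) = (\<Sum>b\<in>B. card {a\<in>A. R a b})"
  using assms by (simp add: card_filter_sum sum.swap[of _ A B])

lemma card_fib:
  assumes "finite X" "finite Y" "\<And>x. x\<in>X \<Longrightarrow> \<phi> x \<in> Y"
  shows "card {x\<in>X. Q (\<phi> x)} = (\<Sum>z\<in>{z\<in>Y. Q z}. card {x\<in>X. \<phi> x = z})"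
proof -
  have eq: "{x\<in>X. Q (\<phi> x)} = (\<Union>z\<in>{z\<in>Y. Q z}. {x\<in>X. \<phi> x = z})" using assms by auto
  show ?thesis unfolding eq by (rule card_UN_disjoint) (use assms in auto)
qed

lemma pg_closed: "perm_group \<Omega> G \<Longrightarrow> g \<in> G \<Longrightarrow> x \<in> \<Omega> \<Longrightarrow> g x \<in> \<Omega>"
  unfolding perm_group_def by auto

lemma fiber_le:
  assumes fin: "finite \<Omega>" and pg: "perm_group \<Omega> G" and tr: "transitive_on \<Omega> G"
    and a: "a \<in> \<Omega>" "p \<in> \<Omega>" "a' \<in> \<Omega>" "p' \<in> \<Omega>"
  shows "card {g\<in>G. g a = p} \<le> card {g\<in>G. g a' = p'}"
proof -
  obtain t where t: "t \<in> G" "t p = p'" using tr a unfolding transitive_on_def by blast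
  obtain s where s: "s \<in> G" "s a' = a" using tr a unfolding transitive_on_def by blast
  define \<phi> where "\<phi> g = compose \<Omega> t (compose \<Omega> g s)" for g
  have GP: "G \<subseteq> \<Omega> \<rightarrow>\<^sub>E \<Omega>" and bij: "\<And>g. g\<in>G \<Longrightarrow> bij_betw g \<Omega> \<Omega>"
    and cl: "\<And>f g. f\<in>G \<Longrightarrow> g\<in>G \<Longrightarrow> compose \<Omega> g f \<in> G" using pg unfolding perm_group_def by auto
  have "finite (\<Omega> \<rightarrow>\<^sub>E \<Omega>)" by (rule finite_PiE) (use fin in auto)
  then have finG: "finite G" using GP by (rule finite_subset[rotated])
  have phiv: "\<phi> g x = t (g (s x))" if "x \<in> \<Omega>" "g \<in> G" for g x
    using that pg_closed[OF pg s(1)] by (simp add: \<phi>_def compose_def)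
  have "inj_on \<phi> {g\<in>G. g a = p}"
  proof (rule inj_onI)
    fix g1 g2 assume g: "g1 \<in> {g\<in>G. g a = p}" "g2 \<in> {g\<in>G. g a = p}" "\<phi> g1 = \<phi> g2"
    show "g1 = g2"
    proof (rule extensionalityI)
      have "g1 \<in> \<Omega> \<rightarrow>\<^sub>E \<Omega>" "g2 \<in> \<Omega> \<rightarrow>\<^sub>E \<Omega>" using GP g(1,2) by auto
      then show "g1 \<in> extensional \<Omega>" "g2 \<in> extensional \<Omega>" by (meson PiE_iff)+
      fix x assume x: "x \<in> \<Omega>"
      have "s ` \<Omega> = \<Omega>" using bij[OF s(1)] by (simp add: bij_betw_def)
      then have "x \<in> s ` \<Omega>" using x by simp
      then obtain z where z: "z \<in> \<Omega>" "s z = x" by (rule imageE) simp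
      have "\<phi> g1 z = \<phi> g2 z" using g(3) by simp
      moreover have "g1 \<in> G" "g2 \<in> G" using g(1,2) by simp_all
      ultimately have "t (g1 x) = t (g2 x)" using phiv[of z g1] phiv[of z g2] z by simp
      moreover have "inj_on t \<Omega>" using bij[OF t(1)] by (simp add: bij_betw_def)
      moreover have "g1 x \<in> \<Omega>" "g2 x \<in> \<Omega>" using pg_closed[OF pg] \<open>g1 \<in> G\<close> \<open>g2 \<in> G\<close> x by auto
      ultimately show "g1 x = g2 x" by (meson inj_onD)
    qed
  qed
  moreover have "\<phi> ` {g\<in>G. g a = p} \<subseteq> {g\<in>G. g a' = p'}"
  proof
    fix h assume "h \<in> \<phi> ` {g\<in>G. g a = p}"
    then obtain g where g: "g \<in> G" "g a = p" "h = \<phi> g" by blast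
    have "\<phi> g \<in> G" unfolding \<phi>_def by (rule cl[OF cl[OF s(1) g(1)] t(1)])
    moreover have "\<phi> g a' = p'" using phiv[OF a(3) g(1)] s(2) g(2) t(2) by simp
    ultimately show "h \<in> {g\<in>G. g a' = p'}" using g(3) by simp
  qed
  ultimately show ?thesis by (rule card_inj_on_le) (use finG in auto)
qed

lemma fiber_eq:
  assumes "finite \<Omega>" "perm_group \<Omega> G" "transitive_on \<Omega> G"
    "a \<in> \<Omega>" "p \<in> \<Omega>" "a' \<in> \<Omega>" "p' \<in> \<Omega>"
  shows "card {g\<in>G. g a = p} = card {g\<in>G. g a' = p'}"
  using fiber_le[OF assms] fiber_le[OF assms(1-3) assms(6,7,4,5)] by simp

lemma uniform:
  assumes fin: "finite \<Omega>" and n: "card \<Omega> = n" and ts: "transf_semigroup \<Omega> S"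
    and pg: "perm_group \<Omega> G" and GS: "G \<subseteq> S" and tr: "transitive_on \<Omega> G"
    and mn: "\<forall>h\<in>S. r \<le> rank \<Omega> h" and f: "f \<in> S" "rank \<Omega> f = r" and y: "y \<in> f ` \<Omega>"
  shows "card {x\<in>\<Omega>. f x = y} * r = n"
proof -
  define A where "A = f ` \<Omega>"
  have SP: "S \<subseteq> \<Omega> \<rightarrow>\<^sub>E \<Omega>" and clS: "\<And>f g. f\<in>S \<Longrightarrow> g\<in>S \<Longrightarrow> compose \<Omega> g f \<in> S"
    using ts unfolding transf_semigroup_def by auto
  have AO: "A \<subseteq> \<Omega>" using SP f(1) unfolding A_def by auto
  have cA: "card A = r" using f(2) unfolding A_def rank_def by simp
  have finA: "finite A" using fin AO finite_subset by blast
  have GP: "G \<subseteq> \<Omega> \<rightarrow>\<^sub>E \<Omega>" using pg unfolding perm_group_def by auto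
  have "finite (\<Omega> \<rightarrow>\<^sub>E \<Omega>)" by (rule finite_PiE) (use fin in auto)
  then have finG: "finite G" using GP by (rule finite_subset[rotated])
  have yO: "y \<in> \<Omega>" using y AO A_def by auto
  have one: "card {a\<in>A. f (g a) = y} = 1" if g: "g \<in> G" for g
  proof -
    have gS: "g \<in> S" using g GS by auto
    define k where "k = compose \<Omega> f (compose \<Omega> g f)"
    have "k \<in> S" unfolding k_def by (rule clS[OF clS[OF f(1) gS] f(1)])
    then have rk: "r \<le> card (k ` \<Omega>)" using mn unfolding rank_def by auto
    have "k ` \<Omega> = (\<lambda>a. f (g a)) ` A" unfolding k_def A_def
      using SP f(1) pg_closed[OF pg g] by (auto simp: compose_def image_image)
    with rk have r1: "r \<le> card ((\<lambda>a. f (g a)) ` A)" by simp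
    have sub: "(\<lambda>a. f (g a)) ` A \<subseteq> A" using AO pg_closed[OF pg g] unfolding A_def by auto
    have le: "card ((\<lambda>a. f (g a)) ` A) \<le> card A" by (rule card_image_le[OF finA])
    have inj: "inj_on (\<lambda>a. f (g a)) A" by (rule eq_card_imp_inj_on[OF finA]) (use r1 le cA in simp)
    have "(\<lambda>a. f (g a)) ` A = A" using card_subset_eq[OF finA sub] r1 le cA by simp
    then obtain a where a: "a \<in> A" "f (g a) = y" using y A_def by (metis imageE)
    then have "{a\<in>A. f (g a) = y} = {a}" using inj by (auto dest: inj_onD)
    then show ?thesis by simp
  qed
  define c where "c = card {g\<in>G. g y = y}"
  have cc: "card {g\<in>G. g a = p} = c" if "a \<in> \<Omega>" "p \<in> \<Omega>" for a p
    unfolding c_def using fiber_eq[OF fin pg tr that yO yO] .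
  have "restrict id \<Omega> \<in> G" using pg unfolding perm_group_def by auto
  then have "restrict id \<Omega> \<in> {g\<in>G. g y = y}" using yO by simp
  then have cpos: "c > 0" unfolding c_def using finG
    by (metis (no_types, lifting) card_gt_0_iff empty_iff finite_subset mem_Collect_eq subsetI)
  define P where "P = {p\<in>\<Omega>. f p = y}"
  have "card G = card {g\<in>G. True}" by simp
  also have "\<dots> = (\<Sum>z\<in>{z\<in>\<Omega>. True}. card {g\<in>G. g y = z})"
    by (rule card_fib[OF finG fin]) (use pg_closed[OF pg] yO in auto)
  also have "\<dots> = n * c" using cc yO n by simp
  finally have G1: "card G = n * c" .
  have "card G = (\<Sum>g\<in>G. card {a\<in>A. f (g a) = y})" using one by simp
  also have "\<dots> = (\<Sum>a\<in>A. card {g\<in>G. f (g a) = y})" by (rule card_swap[OF finG finA])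
  also have "\<dots> = (\<Sum>a\<in>A. card P * c)"
  proof (rule sum.cong[OF refl])
    fix a assume a: "a \<in> A"
    have "card {g\<in>G. f (g a) = y} = (\<Sum>z\<in>{z\<in>\<Omega>. f z = y}. card {g\<in>G. g a = z})"
      by (rule card_fib[OF finG fin]) (use pg_closed[OF pg] a AO in auto)
    also have "\<dots> = card P * c" using cc a AO unfolding P_def by auto
    finally show "card {g\<in>G. f (g a) = y} = card P * c" .
  qed
  also have "\<dots> = r * card P * c" using cA by simp
  finally have "n * c = r * card P * c" using G1 by simp
  then have "n = r * card P" using cpos by simp
  then show ?thesis unfolding P_def by simp
qed

theorem theorem12:
  fixes \<Omega> :: "'a set" and S G :: "('a \<Rightarrow> 'a) set" and n r :: nat
  assumes "finite \<Omega>" and "card \<Omega> = n"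
    and "transf_semigroup \<Omega> S"
    and "perm_group \<Omega> G" and "G \<subseteq> S" and "primitive \<Omega> G"
    and "\<exists>h\<in>S. rank \<Omega> h = r" and "\<forall>h\<in>S. r \<le> rank \<Omega> h"
    and "r > 1"
  shows "\<not> (\<exists>h\<in>S. rank \<Omega> h > r \<and>
            card {B \<in> kernel_partition \<Omega> h. real (card B) = real n / real r} = r - 1)"
proof
  note fin = assms(1) and n = assms(2) and ts = assms(3) and pg = assms(4) and GS = assms(5)
    and mn = assms(8) and r1 = assms(9)
  have tr: "transitive_on \<Omega> G" using assms(6) unfolding primitive_def by auto
  have SP: "S \<subseteq> \<Omega> \<rightarrow>\<^sub>E \<Omega>" and clS: "\<And>f g. f\<in>S \<Longrightarrow> g\<in>S \<Longrightarrow> compose \<Omega> g f \<in> S"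
    using ts unfolding transf_semigroup_def by auto
  have clG: "\<And>f g. f\<in>G \<Longrightarrow> g\<in>G \<Longrightarrow> compose \<Omega> g f \<in> G" and idG: "restrict id \<Omega> \<in> G"
    using pg unfolding perm_group_def by auto
  obtain f where f: "f \<in> S" "rank \<Omega> f = r" using assms(7) by auto
  have fO: "\<And>x. x \<in> \<Omega> \<Longrightarrow> f x \<in> \<Omega>" using SP f(1) by auto
  have "card (f ` \<Omega>) > 1" using f r1 unfolding rank_def by simp
  then have "\<not> (\<forall>a\<in>f ` \<Omega>. \<forall>b\<in>f ` \<Omega>. a = b)" using card_le_Suc0_iff_eq[of "f ` \<Omega>"] fin by auto
  then obtain u v where uv: "u \<in> f ` \<Omega>" "v \<in> f ` \<Omega>" "u \<noteq> v" by blast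
  then obtain x0 where x0: "x0 \<in> \<Omega>" by auto
  define m where "m = card {x\<in>\<Omega>. f x = f x0}"
  have nm: "m * r = n" unfolding m_def using uniform[OF fin n ts pg GS tr mn f] x0 by auto
  assume "\<exists>h\<in>S. rank \<Omega> h > r \<and>
            card {B \<in> kernel_partition \<Omega> h. real (card B) = real n / real r} = r - 1"
  then obtain h where h: "h \<in> S" "rank \<Omega> h > r"
    and hK: "card {B \<in> kernel_partition \<Omega> h. real (card B) = real n / real r} = r - 1" by auto
  have hO: "\<And>x. x \<in> \<Omega> \<Longrightarrow> h x \<in> \<Omega>" using SP h(1) by auto
  define Q where "Q = kernel_partition \<Omega> h"
  define K where "K = {B \<in> Q. card B = m}"
  have "real n / real r = real m" using nm r1
    by (metis nonzero_divide_eq_eq not_one_less_zero of_nat_0_eq_iff of_nat_mult gr_implies_not0)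
  then have cK: "card K = r - 1" using hK unfolding K_def Q_def by simp
  define F where "F y = {x\<in>\<Omega>. h x = y}" for y
  have Fe: "\<Omega> \<inter> h -` {y} = F y" for y unfolding F_def by blast
  have Qeq: "Q = F ` (h ` \<Omega>)" unfolding Q_def kernel_partition_def Fe by blast
  have injF: "inj_on F (h ` \<Omega>)"
  proof (rule inj_onI)
    fix a b assume a: "a \<in> h ` \<Omega>" and b: "b \<in> h ` \<Omega>" and e: "F a = F b"
    obtain x where x: "x \<in> \<Omega>" "h x = a" using a by blast
    have "x \<in> F a" using x unfolding F_def by simp
    then have "x \<in> F b" using e by simp
    then show "a = b" using x unfolding F_def by simp
  qed
  have finQ: "finite Q" using Qeq fin by simp
  have cQ: "card Q > r" using h(2) Qeq card_image[OF injF] unfolding rank_def by simp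
  have KQ: "K \<subseteq> Q" unfolding K_def by auto
  have "card (Q - K) = card Q - card K" using card_Diff_subset[OF finite_subset[OF KQ finQ] KQ] .
  then have "card (Q - K) \<ge> 2" using cQ cK r1 by simp
  then have "\<not> (\<forall>a\<in>Q - K. \<forall>b\<in>Q - K. a = b)" using card_le_Suc0_iff_eq[of "Q - K"] finQ by auto
  then obtain B1 B2 where B: "B1 \<in> Q - K" "B2 \<in> Q - K" "B1 \<noteq> B2" by blast
  obtain y1 where y1: "y1 \<in> h ` \<Omega>" "B1 = F y1" using B Qeq by auto
  obtain y2 where y2: "y2 \<in> h ` \<Omega>" "B2 = F y2" using B Qeq by auto
  obtain x1 where x1: "x1 \<in> \<Omega>" "h x1 = y1" using y1 by auto
  obtain x2 where x2: "x2 \<in> \<Omega>" "h x2 = y2" using y2 by auto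
  have y12: "y1 \<noteq> y2" using B y1 y2 by auto
  define U where "U = \<Union>K"
  have UO: "U \<subseteq> \<Omega>" unfolding U_def K_def Qeq F_def by auto
  have cU: "card U = (r - 1) * m"
  proof -
    have "card U = sum card K" unfolding U_def
    proof (rule card_Union_disjoint)
      show "pairwise disjnt K"
      proof (rule pairwiseI)
        fix A1 A2 assume A: "A1 \<in> K" "A2 \<in> K" "A1 \<noteq> A2"
        then obtain a1 a2 where e: "A1 = F a1" "A2 = F a2" using KQ Qeq by blast
        then have "a1 \<noteq> a2" using A(3) by blast
        then show "disjnt A1 A2" unfolding e disjnt_def F_def by blast
      qed
      show "\<And>A. A \<in> K \<Longrightarrow> finite A" using KQ Qeq fin F_def by auto
    qed
    also have "\<dots> = card K * m" unfolding K_def by simp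
    finally show ?thesis using cK by simp
  qed
  have cOU: "card (\<Omega> - U) = m"
  proof -
    have "card (\<Omega> - U) = n - (r - 1) * m" using card_Diff_subset[OF finite_subset[OF UO fin] UO] cU n by simp
    also have "\<dots> = m"
    proof -
      obtain r' where r': "r = Suc r'" using r1 by (cases r) auto
      have "n = m + r' * m" using nm r' by (simp add: algebra_simps)
      then show ?thesis using r' by simp
    qed
    finally show ?thesis .
  qed
  have key: "f (g y1) = f (g y2)" if g: "g \<in> G" for g
  proof -
    have gS: "g \<in> S" using g GS by auto
    have gO: "\<And>x. x \<in> \<Omega> \<Longrightarrow> g x \<in> \<Omega>" using pg_closed[OF pg g] .
    define k where "k = compose \<Omega> f (compose \<Omega> g h)"
    have kS: "k \<in> S" unfolding k_def by (rule clS[OF clS[OF h(1) gS] f(1)])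
    have kv: "\<And>x. x \<in> \<Omega> \<Longrightarrow> k x = f (g (h x))" unfolding k_def using hO by (simp add: compose_def)
    have "k ` \<Omega> \<subseteq> f ` \<Omega>" using kv gO hO by auto
    then have "card (k ` \<Omega>) \<le> card (f ` \<Omega>)" by (rule card_mono[rotated]) (use fin in simp)
    then have "card (k ` \<Omega>) \<le> r" using f(2) unfolding rank_def by simp
    then have rk: "rank \<Omega> k = r" using mn kS unfolding rank_def by (simp add: le_antisym)
    define C where "C x = {z\<in>\<Omega>. k z = k x}" for x
    have cC: "card (C x) = m" if "x \<in> \<Omega>" for x
    proof -
      have "card (C x) * r = n" unfolding C_def
        using uniform[OF fin n ts pg GS tr mn kS rk, of "k x"] that by auto
      then have "card (C x) * r = m * r" using nm by simp
      then show ?thesis using r1 by simp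
    qed
    have sub: "C x \<subseteq> \<Omega> - U" if x: "x \<in> \<Omega>" "F (h x) \<notin> K" for x
    proof
      fix z assume z: "z \<in> C x"
      have zO: "z \<in> \<Omega>" using z C_def by auto
      show "z \<in> \<Omega> - U"
      proof (rule ccontr)
        assume "z \<notin> \<Omega> - U"
        then obtain B where B: "B \<in> K" "z \<in> B" using zO U_def by auto
        then obtain y where yB: "B = F y" using KQ Qeq by auto
        have "B \<subseteq> C x" using B yB z kv unfolding F_def C_def by auto
        moreover have "card B = card (C x)" using B cC[OF x(1)] K_def by simp
        moreover have "finite (C x)" using fin C_def by auto
        ultimately have "B = C x" by (simp add: card_subset_eq)
        then have "x \<in> B" using x C_def by auto
        then have "F (h x) = B" using yB F_def by auto
        then show False using x B by simp
      qed
    qed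
    have "F (h x1) \<notin> K" using B(1) y1(2) x1(2) by simp
    then have s1: "C x1 \<subseteq> \<Omega> - U" by (rule sub[OF x1(1)])
    have e1: "C x1 = \<Omega> - U"
      by (rule card_subset_eq[OF _ s1]) (use fin cC[OF x1(1)] cOU in simp_all)
    have "F (h x2) \<notin> K" using B(2) y2(2) x2(2) by simp
    then have s2: "C x2 \<subseteq> \<Omega> - U" by (rule sub[OF x2(1)])
    have e2: "C x2 = \<Omega> - U"
      by (rule card_subset_eq[OF _ s2]) (use fin cC[OF x2(1)] cOU in simp_all)
    have "x2 \<in> C x1" using e1 e2 x2 C_def by auto
    then show ?thesis using kv x1 x2 C_def by auto
  qed
  define E where "E = {(a, b) \<in> \<Omega> \<times> \<Omega>. \<forall>g\<in>G. f (g a) = f (g b)}"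
  have "equiv \<Omega> E" unfolding equiv_def refl_on_def sym_def trans_def E_def by auto
  moreover have "preserves_rel G E" unfolding preserves_rel_def
  proof (intro ballI, clarify)
    fix g' a b assume g': "g' \<in> G" and ab: "(a, b) \<in> E"
    have aO: "a \<in> \<Omega>" "b \<in> \<Omega>" using ab E_def by auto
    have "f (g (g' a)) = f (g (g' b))" if g: "g \<in> G" for g
    proof -
      have "f (compose \<Omega> g g' a) = f (compose \<Omega> g g' b)" using ab clG[OF g' g] E_def by auto
      then show ?thesis using aO by (simp add: compose_def)
    qed
    then show "(g' a, g' b) \<in> E" using E_def aO pg_closed[OF pg g'] by auto
  qed
  ultimately have disj: "E = Id_on \<Omega> \<or> E = \<Omega> \<times> \<Omega>" using assms(6) unfolding primitive_def by auto
  have y12E: "(y1, y2) \<in> E" using key E_def x1 x2 hO by auto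
  have nId: "E \<noteq> Id_on \<Omega>" using y12E y12 by auto
  obtain u' v' where uv': "u' \<in> \<Omega>" "v' \<in> \<Omega>" "f u' \<noteq> f v'" using uv by auto
  have nE: "(u', v') \<notin> E"
  proof
    assume "(u', v') \<in> E"
    then have "f (restrict id \<Omega> u') = f (restrict id \<Omega> v')" using idG unfolding E_def by blast
    then show False using uv' by simp
  qed
  show False using disj nId nE uv'(1,2) by blast
qed

end
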